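(* For $n\ge1$ let $\mathbb{T}_n$ be $\mathbb{C}^n$ with basis $e_1,\dots,e_n$ and product $(a\cdot b)^i=\sum_{k=1}^i a^k b^{i-k+1}$, i.e. $e_i\cdot e_j=e_{i+j-1}$ if $i+j-1\le n$ and $e_i\cdot e_j=0$ otherwise. Then for every $n$, $\mathbb{T}_n$ is an associative Novikov algebra. Moreover: (i) a symmetric bilinear form $g=(g_{ij})$ on $\mathbb{T}_n$ satisfies $g(a\cdot b,c)=g(a,c\cdot b)$ for all $a,b,c$ if and only if $g_{ij}=g_{1,i+j-1}$ when $1\le i+j-1\le n$ and $g_{ij}=0$ otherwise; such a form is nondegenerate if $g_{1n}\neq0$; (ii) there is no nonzero skew-symmetric bilinear form $f$ on $\mathbb{T}_n$ satisfying both $f(a\cdot b,c)=f(a,c\cdot b)$ and $f(a\cdot b,c)+f(b\cdot c,a)+f(c\cdot a,b)=0$ for all $a,b,c\in\mathbb{T}_n$.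
   Context: A Novikov algebra is a complex vector space with a bilinear product $\cdot$ satisfying $(a\cdot b)\cdot c=(a\cdot c)\cdot b$ and $(a\cdot b)\cdot c-a\cdot(b\cdot c)=(b\cdot a)\cdot c-b\cdot(a\cdot c)$ for all $a,b,c$. For a bilinear form $g$, $g_{ij}=g(e_i,e_j)$. *)

theory Defs
  imports Complex_Main
begin

text \<open>The algebra T_n: vectors of C^n are represented as functions nat => complex
  with coordinates indexed by 1..n and vanishing outside {1..n}.\<close>

definition inT :: "nat \<Rightarrow> (nat \<Rightarrow> complex) \<Rightarrow> bool" where
  "inT n a \<longleftrightarrow> (\<forall>i. i \<notin> {1..n} \<longrightarrow> a i = 0)"

definition tprod :: "nat \<Rightarrow> (nat \<Rightarrow> complex) \<Rightarrow> (nat \<Rightarrow> complex) \<Rightarrow> (nat \<Rightarrow> complex)" where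
  "tprod n a b = (\<lambda>i. if i \<in> {1..n} then (\<Sum>k=1..i. a k * b (i - k + 1)) else 0)"

definition bform :: "nat \<Rightarrow> (nat \<Rightarrow> nat \<Rightarrow> complex) \<Rightarrow> (nat \<Rightarrow> complex) \<Rightarrow> (nat \<Rightarrow> complex) \<Rightarrow> complex" where
  "bform n g a b = (\<Sum>i=1..n. \<Sum>j=1..n. a i * g i j * b j)"

definition sym_form :: "nat \<Rightarrow> (nat \<Rightarrow> nat \<Rightarrow> complex) \<Rightarrow> bool" where
  "sym_form n g \<longleftrightarrow> (\<forall>i\<in>{1..n}. \<forall>j\<in>{1..n}. g i j = g j i)"

definition skew_form :: "nat \<Rightarrow> (nat \<Rightarrow> nat \<Rightarrow> complex) \<Rightarrow> bool" where
  "skew_form n g \<longleftrightarrow> (\<forall>i\<in>{1..n}. \<forall>j\<in>{1..n}. g i j = - g j i)"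

definition nondegenerate :: "nat \<Rightarrow> (nat \<Rightarrow> nat \<Rightarrow> complex) \<Rightarrow> bool" where
  "nondegenerate n g \<longleftrightarrow>
     (\<forall>a. inT n a \<longrightarrow> (\<forall>b. inT n b \<longrightarrow> bform n g a b = 0) \<longrightarrow> a = (\<lambda>_. 0))"

definition invariant :: "nat \<Rightarrow> (nat \<Rightarrow> nat \<Rightarrow> complex) \<Rightarrow> bool" where
  "invariant n g \<longleftrightarrow> (\<forall>a b c. inT n a \<longrightarrow> inT n b \<longrightarrow> inT n c \<longrightarrow>
      bform n g (tprod n a b) c = bform n g a (tprod n c b))"

definition cyclic :: "nat \<Rightarrow> (nat \<Rightarrow> nat \<Rightarrow> complex) \<Rightarrow> bool" where
  "cyclic n f \<longleftrightarrow> (\<forall>a b c. inT n a \<longrightarrow> inT n b \<longrightarrow> inT n c \<longrightarrow>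
      bform n f (tprod n a b) c + bform n f (tprod n b c) a + bform n f (tprod n c a) b = 0)"

end

theory Submission imports Defs "HOL-Computational_Algebra.Formal_Power_Series" begin

definition toF :: "(nat \<Rightarrow> complex) \<Rightarrow> complex fps" where
  "toF a = Abs_fps (\<lambda>k. a (Suc k))"

lemma tp0: "i \<notin> {1..n} \<Longrightarrow> tprod n a b i = 0"
  unfolding tprod_def by auto

lemma tp: assumes "i \<in> {1..n}" shows "tprod n a b i = fps_nth (toF a * toF b) (i - 1)"
proof -
  obtain m where m: "i = Suc m" using assms by (cases i) auto
  have "tprod n a b i = (\<Sum>k=Suc 0..Suc m. a k * b (Suc m - k + 1))"
    using assms m by (simp add: tprod_def)
  also have "\<dots> = (\<Sum>j=0..m. a (Suc j) * b (Suc m - Suc j + 1))"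
    by (rule sum.shift_bounds_cl_Suc_ivl)
  also have "\<dots> = (\<Sum>j=0..m. a (Suc j) * b (Suc (m - j)))"
    by (rule sum.cong) auto
  finally show ?thesis by (simp add: m fps_mult_nth toF_def)
qed

lemma tp2: "k < n \<Longrightarrow> fps_nth (toF (tprod n a b)) k = fps_nth (toF a * toF b) k"
  using tp[of "Suc k" n a b] by (simp add: toF_def)

lemma tpcomm: "tprod n a b = tprod n b a"
proof (rule ext)
  fix i show "tprod n a b i = tprod n b a i"
  proof (cases "i \<in> {1..n}")
    case True
    then show ?thesis using tp[OF True, of a b] tp[OF True, of b a] by (simp add: mult.commute)
  next
    case False then show ?thesis by (simp add: tp0)
  qed
qed

lemma tp3: assumes "i \<in> {1..n}"
  shows "tprod n (tprod n a b) c i = fps_nth (toF a * toF b * toF c) (i - 1)"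
proof -
  have "tprod n (tprod n a b) c i = fps_nth (toF (tprod n a b) * toF c) (i - 1)" using tp assms by blast
  also have "\<dots> = (\<Sum>j=0..i-1. fps_nth (toF (tprod n a b)) j * fps_nth (toF c) (i - 1 - j))" by (simp add: fps_mult_nth)
  also have "\<dots> = (\<Sum>j=0..i-1. fps_nth (toF a * toF b) j * fps_nth (toF c) (i - 1 - j))"
    by (rule sum.cong) (use assms in \<open>auto simp: tp2\<close>)
  finally show ?thesis by (simp add: fps_mult_nth)
qed

lemma tpassoc: "tprod n (tprod n a b) c = tprod n a (tprod n b c)"
proof (rule ext)
  fix i show "tprod n (tprod n a b) c i = tprod n a (tprod n b c) i"
  proof (cases "i \<in> {1..n}")
    case True
    have "tprod n a (tprod n b c) i = tprod n (tprod n b c) a i" by (simp add: tpcomm)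
    also have "\<dots> = fps_nth (toF b * toF c * toF a) (i - 1)" using tp3 True by blast
    finally show ?thesis using tp3[OF True] by (simp add: ac_simps)
  next
    case False then show ?thesis by (simp add: tp0)
  qed
qed


definition ev :: "nat \<Rightarrow> nat \<Rightarrow> complex" where "ev k = (\<lambda>i. if i = k then 1 else 0)"

lemma inT_ev: "k \<in> {1..n} \<Longrightarrow> inT n (ev k)"
  by (auto simp: inT_def ev_def)

lemma tprod_ev1: assumes "inT n b" shows "tprod n (ev 1) b = b"
proof (rule ext)
  fix i show "tprod n (ev 1) b i = b i"
  proof (cases "i \<in> {1..n}")
    case True
    then have "tprod n (ev 1) b i = (\<Sum>k=1..i. ev 1 k * b (i - k + 1))"
      by (simp add: tprod_def)
    also have "\<dots> = (\<Sum>k=1..i. if k = 1 then b (i - k + 1) else 0)"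
      by (rule sum.cong) (auto simp: ev_def)
    also have "\<dots> = b i" using True by (subst sum.delta) auto
    finally show ?thesis .
  next
    case False then show ?thesis using assms by (simp add: tp0 inT_def)
  qed
qed

lemma tprod_ev: assumes "k \<ge> 1" "j \<ge> 1"
  shows "tprod n (ev k) (ev j) = (if k + j - 1 \<le> n then ev (k + j - 1) else (\<lambda>_. 0))"
proof (rule ext)
  fix i show "tprod n (ev k) (ev j) i = (if k + j - 1 \<le> n then ev (k + j - 1) else (\<lambda>_. 0)) i"
  proof (cases "i \<in> {1..n}")
    case True
    then have "tprod n (ev k) (ev j) i = (\<Sum>p=1..i. ev k p * ev j (i - p + 1))"
      by (simp add: tprod_def)
    also have "\<dots> = (\<Sum>p=1..i. if p = k then (if i - p + 1 = j then 1 else 0) else 0)"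
      by (rule sum.cong) (auto simp: ev_def)
    also have "\<dots> = (if k \<in> {1..i} then (if i - k + 1 = j then 1 else 0) else 0)"
      by (subst sum.delta) auto
    finally show ?thesis using True assms by (auto simp: ev_def)
  next
    case False then show ?thesis using assms by (auto simp: tp0 ev_def)
  qed
qed

lemma bform_ev_ev: "i \<in> {1..n} \<Longrightarrow> j \<in> {1..n} \<Longrightarrow> bform n g (ev i) (ev j) = g i j"
proof -
  assume a: "i \<in> {1..n}" "j \<in> {1..n}"
  have "bform n g (ev i) (ev j) = (\<Sum>p=1..n. \<Sum>q=1..n. if p = i then (if q = j then g p q else 0) else 0)"
    unfolding bform_def by (intro sum.cong refl) (auto simp: ev_def)
  also have "\<dots> = (\<Sum>p=1..n. if p = i then g i j else 0)"
    by (rule sum.cong) (use a in auto)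
  also have "\<dots> = g i j" using a by simp
  finally show ?thesis .
qed

lemma bform_zero: "bform n g a (\<lambda>_. 0) = 0"
  by (simp add: bform_def)

lemma forward:
  assumes "invariant n g" "i \<in> {1..n}" "j \<in> {1..n}"
  shows "g i j = (if 1 \<le> i + j - 1 \<and> i + j - 1 \<le> n then g 1 (i + j - 1) else 0)"
proof -
  have "1 \<in> {1..n}" using assms by auto
  then have "bform n g (tprod n (ev 1) (ev i)) (ev j) = bform n g (ev 1) (tprod n (ev j) (ev i))"
    using assms inT_ev unfolding invariant_def by blast
  moreover have "tprod n (ev 1) (ev i) = ev i" using tprod_ev1 inT_ev assms by blast
  ultimately have "g i j = bform n g (ev 1) (tprod n (ev j) (ev i))"
    using bform_ev_ev assms by simp
  also have "\<dots> = (if j + i - 1 \<le> n then g 1 (j + i - 1) else 0)"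
    using assms `1 \<in> {1..n}` bform_ev_ev[of 1 n "j + i - 1" g] by (auto simp: tprod_ev bform_zero)
  finally show ?thesis using assms by (auto simp: add.commute)
qed


lemma hankel:
  assumes H: "\<forall>i\<in>{1..n}. \<forall>j\<in>{1..n}. g i j = (if 1 \<le> i + j - 1 \<and> i + j - 1 \<le> n then g 1 (i + j - 1) else 0)"
  shows "bform n g x y = (\<Sum>m=1..n. g 1 m * tprod n x y m)"
proof -
  have R: "(\<Sum>m=1..n. g 1 m * tprod n x y m)
        = (\<Sum>k=1..n. \<Sum>m=1..n. if k \<le> m then g 1 m * (x k * y (m - k + 1)) else 0)"
  proof -
    have "(\<Sum>m=1..n. g 1 m * tprod n x y m)
        = (\<Sum>m=1..n. \<Sum>k=1..n. if k \<le> m then g 1 m * (x k * y (m - k + 1)) else 0)"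
    proof (rule sum.cong[OF refl])
      fix m assume m: "m \<in> {1..n}"
      have "g 1 m * tprod n x y m = (\<Sum>k=1..m. g 1 m * (x k * y (m - k + 1)))"
        using m by (simp add: tprod_def sum_distrib_left)
      also have "\<dots> = (\<Sum>k=1..n. if k \<le> m then g 1 m * (x k * y (m - k + 1)) else 0)"
        using m by (intro sum.mono_neutral_cong_left) auto
      finally show "g 1 m * tprod n x y m = (\<Sum>k=1..n. if k \<le> m then g 1 m * (x k * y (m - k + 1)) else 0)" .
    qed
    also have "\<dots> = (\<Sum>k=1..n. \<Sum>m=1..n. if k \<le> m then g 1 m * (x k * y (m - k + 1)) else 0)"
      by (rule sum.swap)
    finally show ?thesis .
  qed
  have L: "bform n g x y = (\<Sum>k=1..n. \<Sum>m=1..n. if k \<le> m then g 1 m * (x k * y (m - k + 1)) else 0)"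
    unfolding bform_def
  proof (rule sum.cong[OF refl])
    fix k assume k: "k \<in> {1..n}"
    define G where "G = (\<lambda>m. g 1 m * (x k * y (m - k + 1)))"
    have Hk: "g k j = (if 1 \<le> k + j - 1 \<and> k + j - 1 \<le> n then g 1 (k + j - 1) else 0)"
      if "j \<in> {1..n}" for j using H k that by blast
    have "(\<Sum>j=1..n. x k * g k j * y j) = (\<Sum>j=1..n+1-k. x k * g k j * y j)"
    proof (intro sum.mono_neutral_cong_right)
      show "\<forall>j\<in>{1..n} - {1..n + 1 - k}. x k * g k j * y j = 0"
      proof
        fix j assume j: "j \<in> {1..n} - {1..n + 1 - k}"
        then have "g k j = 0" using Hk[of j] by auto
        then show "x k * g k j * y j = 0" by simp
      qed
    qed (use k in auto)
    also have "\<dots> = (\<Sum>j=1..n+1-k. G (j + (k - 1)))"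
    proof (intro sum.cong refl)
      fix j assume j: "j \<in> {1..n+1-k}"
      then have "g k j = g 1 (k + j - 1)" using Hk[of j] k by auto
      moreover have "j + (k - 1) - k + 1 = j" "j + (k - 1) = k + j - 1" using j k by auto
      ultimately show "x k * g k j * y j = G (j + (k - 1))" by (simp add: G_def)
    qed
    also have "\<dots> = (\<Sum>m=1+(k-1)..(n+1-k)+(k-1). G m)"
      by (rule sum.shift_bounds_cl_nat_ivl[symmetric])
    also have "\<dots> = (\<Sum>m=k..n. G m)" using k by simp
    also have "\<dots> = (\<Sum>m=1..n. if k \<le> m then G m else 0)"
      using k by (intro sum.mono_neutral_cong_left) auto
    finally show "(\<Sum>j=1..n. x k * g k j * y j) = (\<Sum>m=1..n. if k \<le> m then g 1 m * (x k * y (m - k + 1)) else 0)"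
      unfolding G_def by simp
  qed
  show ?thesis using L R by simp
qed


lemma bform_ev_right: "j \<in> {1..n} \<Longrightarrow> bform n g a (ev j) = (\<Sum>i=1..n. a i * g i j)"
proof -
  assume j: "j \<in> {1..n}"
  have "bform n g a (ev j) = (\<Sum>i=1..n. \<Sum>q=1..n. if q = j then a i * g i q else 0)"
    unfolding bform_def by (intro sum.cong refl) (auto simp: ev_def)
  also have "\<dots> = (\<Sum>i=1..n. a i * g i j)" using j by simp
  finally show ?thesis .
qed

lemma nondeg:
  assumes inv: "invariant n g" and g1n: "g 1 n \<noteq> 0"
  shows "nondegenerate n g"
  unfolding nondegenerate_def
proof (intro allI impI)
  fix a assume aT: "inT n a" and z: "\<forall>b. inT n b \<longrightarrow> bform n g a b = 0"
  show "a = (\<lambda>_. 0)"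
  proof (rule ccontr)
    assume "a \<noteq> (\<lambda>_. 0)"
    then obtain i0 where "a i0 \<noteq> 0" by auto
    define m where "m = (LEAST i. a i \<noteq> 0)"
    have am: "a m \<noteq> 0" unfolding m_def by (rule LeastI) fact
    have below: "a i = 0" if "i < m" for i using not_less_Least[of i "\<lambda>i. a i \<noteq> 0"] that m_def by auto
    have mr: "m \<in> {1..n}" using am aT unfolding inT_def by blast
    define j where "j = n + 1 - m"
    have jr: "j \<in> {1..n}" using mr by (auto simp: j_def)
    have "bform n g a (ev j) = (\<Sum>i=1..n. a i * g i j)" using bform_ev_right[OF jr] .
    also have "\<dots> = (\<Sum>i=1..n. if i = m then a m * g 1 n else 0)"
    proof (intro sum.cong refl)
      fix i assume ir: "i \<in> {1..n}"
      have gij: "g i j = (if 1 \<le> i + j - 1 \<and> i + j - 1 \<le> n then g 1 (i + j - 1) else 0)"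
        using forward[OF inv ir jr] .
      show "a i * g i j = (if i = m then a m * g 1 n else 0)"
      proof (cases "i < m")
        case True then show ?thesis using below by auto
      next
        case False
        show ?thesis
        proof (cases "i = m")
          case True
          then have "i + j - 1 = n" using mr by (auto simp: j_def)
          then show ?thesis using gij True ir by auto
        next
          case F2: False
          then have "\<not> i + j - 1 \<le> n" using False mr by (auto simp: j_def)
          then show ?thesis using gij F2 by auto
        qed
      qed
    qed
    also have "\<dots> = a m * g 1 n" using mr by simp
    finally have "bform n g a (ev j) = a m * g 1 n" .
    moreover have "bform n g a (ev j) = 0" using z inT_ev[OF jr] by blast
    ultimately show False using am g1n by simp
  qed
qed

theorem proposition5p1:
  fixes n :: nat
  assumes "n \<ge> 1"
  shows
   "(\<forall>a b. inT n a \<longrightarrow> inT n b \<longrightarrow> inT n (tprod n a b))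
    \<and> (\<forall>a b c. inT n a \<longrightarrow> inT n b \<longrightarrow> inT n c \<longrightarrow>
         tprod n (tprod n a b) c = tprod n a (tprod n b c))
    \<and> (\<forall>a b c. inT n a \<longrightarrow> inT n b \<longrightarrow> inT n c \<longrightarrow>
         tprod n (tprod n a b) c = tprod n (tprod n a c) b)
    \<and> (\<forall>a b c. inT n a \<longrightarrow> inT n b \<longrightarrow> inT n c \<longrightarrow>
         (\<lambda>i. tprod n (tprod n a b) c i - tprod n a (tprod n b c) i) =
         (\<lambda>i. tprod n (tprod n b a) c i - tprod n b (tprod n a c) i))
    \<and> (\<forall>g. sym_form n g \<longrightarrow>
         (invariant n g \<longleftrightarrow>
           (\<forall>i\<in>{1..n}. \<forall>j\<in>{1..n}.
              g i j = (if 1 \<le> i + j - 1 \<and> i + j - 1 \<le> n then g 1 (i + j - 1) else 0))))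
    \<and> (\<forall>g. sym_form n g \<longrightarrow> invariant n g \<longrightarrow> g 1 n \<noteq> 0 \<longrightarrow> nondegenerate n g)
    \<and> (\<forall>f. skew_form n f \<longrightarrow> invariant n f \<longrightarrow> cyclic n f \<longrightarrow>
         (\<forall>i\<in>{1..n}. \<forall>j\<in>{1..n}. f i j = 0))"
proof (intro conjI allI impI)
  fix a b assume "inT n a" "inT n b"
  show "inT n (tprod n a b)" unfolding inT_def using tp0 by blast
next
  fix a b c show "tprod n (tprod n a b) c = tprod n a (tprod n b c)" by (rule tpassoc)
next
  fix a b c show "tprod n (tprod n a b) c = tprod n (tprod n a c) b"
    by (metis tpassoc tpcomm)
next
  fix a b c show "(\<lambda>i. tprod n (tprod n a b) c i - tprod n a (tprod n b c) i) =
         (\<lambda>i. tprod n (tprod n b a) c i - tprod n b (tprod n a c) i)"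
    by (simp add: tpassoc)
next
  fix g assume "sym_form n g"
  show "invariant n g \<longleftrightarrow>
           (\<forall>i\<in>{1..n}. \<forall>j\<in>{1..n}.
              g i j = (if 1 \<le> i + j - 1 \<and> i + j - 1 \<le> n then g 1 (i + j - 1) else 0))"
  proof
    assume "invariant n g" then show "\<forall>i\<in>{1..n}. \<forall>j\<in>{1..n}.
              g i j = (if 1 \<le> i + j - 1 \<and> i + j - 1 \<le> n then g 1 (i + j - 1) else 0)"
      using forward by blast
  next
    assume H: "\<forall>i\<in>{1..n}. \<forall>j\<in>{1..n}.
              g i j = (if 1 \<le> i + j - 1 \<and> i + j - 1 \<le> n then g 1 (i + j - 1) else 0)"
    show "invariant n g" unfolding invariant_def
    proof (intro allI impI)
      fix a b c
      have "tprod n (tprod n a b) c = tprod n a (tprod n c b)" by (metis tpassoc tpcomm)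
      then show "bform n g (tprod n a b) c = bform n g a (tprod n c b)"
        using hankel[OF H] by simp
    qed
  qed
next
  fix g assume "sym_form n g" "invariant n g" "g 1 n \<noteq> 0"
  then show "nondegenerate n g" using nondeg by blast
next
  fix f assume sk: "skew_form n f" and inv: "invariant n f" and "cyclic n f"
  show "\<forall>i\<in>{1..n}. \<forall>j\<in>{1..n}. f i j = 0"
  proof (intro ballI)
  fix i j assume ij: "i \<in> {1..n}" "j \<in> {1..n}"
  have "f i j = f j i" using forward[OF inv ij] forward[OF inv ij(2) ij(1)] by (simp add: add.commute)
  moreover have "f i j = - f j i" using sk ij unfolding skew_form_def by blast
  ultimately show "f i j = 0" by simp
  qed
qed

end
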